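(* If $G$ is a connected, claw-free cubic graph, then $\sigma_{(3,1)}(G) \le \beta(G) + 1$. Moreover, this bound is sharp: there exist connected, claw-free cubic graphs $G$ with $\sigma_{(3,1)}(G) = \beta(G)+1$.
   Context: A graph is claw-free if it has no induced subgraph isomorphic to $K_{1,3}$; it is cubic if every vertex has degree $3$. $\beta(G)$ denotes the vertex covering number (minimum size of a set of vertices meeting every edge). $(p,q)$-spreading: let $p\in\mathbb{N}$ and $q\in\mathbb{N}\cup\{\infty\}$. Start with a set $S\subseteq V(G)$ of blue vertices, all other vertices white. The color change rule: if a white vertex $w$ has at least $p$ blue neighbors, and at least one of the blue neighbors of $w$ has at most $q$ white neighbors, then $w$ is recolored blue. $S$ is a $(p,q)$-spreading set if repeatedly applying this rule eventually colors all vertices blue. $\sigma_{(p,q)}(G)$ is the minimum cardinality of a $(p,q)$-spreading set of $G$. *)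

theory Defs
  imports Main "HOL-Library.Extended_Nat"
begin

definition graph :: "'a set \<Rightarrow> ('a \<Rightarrow> 'a \<Rightarrow> bool) \<Rightarrow> bool" where
  "graph V E \<longleftrightarrow> finite V \<and> (\<forall>u v. E u v \<longrightarrow> u \<in> V \<and> v \<in> V)
     \<and> (\<forall>u v. E u v \<longrightarrow> E v u) \<and> (\<forall>v. \<not> E v v)"

definition nbhd :: "'a set \<Rightarrow> ('a \<Rightarrow> 'a \<Rightarrow> bool) \<Rightarrow> 'a \<Rightarrow> 'a set" where
  "nbhd V E v = {u \<in> V. E v u}"

definition cubic :: "'a set \<Rightarrow> ('a \<Rightarrow> 'a \<Rightarrow> bool) \<Rightarrow> bool" where
  "cubic V E \<longleftrightarrow> (\<forall>v\<in>V. card (nbhd V E v) = 3)"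

definition claw_free :: "'a set \<Rightarrow> ('a \<Rightarrow> 'a \<Rightarrow> bool) \<Rightarrow> bool" where
  "claw_free V E \<longleftrightarrow> \<not> (\<exists>v\<in>V. \<exists>a b c. a \<in> nbhd V E v \<and> b \<in> nbhd V E v \<and> c \<in> nbhd V E v
       \<and> a \<noteq> b \<and> a \<noteq> c \<and> b \<noteq> c \<and> \<not> E a b \<and> \<not> E a c \<and> \<not> E b c)"

definition connected_graph :: "'a set \<Rightarrow> ('a \<Rightarrow> 'a \<Rightarrow> bool) \<Rightarrow> bool" where
  "connected_graph V E \<longleftrightarrow> (\<forall>u\<in>V. \<forall>v\<in>V. E\<^sup>*\<^sup>* u v)"

definition vertex_cover :: "'a set \<Rightarrow> ('a \<Rightarrow> 'a \<Rightarrow> bool) \<Rightarrow> 'a set \<Rightarrow> bool" where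
  "vertex_cover V E C \<longleftrightarrow> C \<subseteq> V \<and> (\<forall>u v. E u v \<longrightarrow> u \<in> C \<or> v \<in> C)"

definition vc_number :: "'a set \<Rightarrow> ('a \<Rightarrow> 'a \<Rightarrow> bool) \<Rightarrow> nat" where
  "vc_number V E = Min {card C | C. vertex_cover V E C}"

text \<open>One round of the (p,q) colour change rule applied to all eligible white vertices
  (the rule is monotone, so the final blue set does not depend on the order of application).\<close>
definition spread_step :: "'a set \<Rightarrow> ('a \<Rightarrow> 'a \<Rightarrow> bool) \<Rightarrow> nat \<Rightarrow> enat \<Rightarrow> 'a set \<Rightarrow> 'a set" where
  "spread_step V E p q B = B \<union> {w \<in> V - B. p \<le> card (nbhd V E w \<inter> B)
       \<and> (\<exists>u \<in> nbhd V E w \<inter> B. enat (card (nbhd V E u - B)) \<le> q)}"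

definition spreading_set :: "'a set \<Rightarrow> ('a \<Rightarrow> 'a \<Rightarrow> bool) \<Rightarrow> nat \<Rightarrow> enat \<Rightarrow> 'a set \<Rightarrow> bool" where
  "spreading_set V E p q S \<longleftrightarrow> S \<subseteq> V \<and> (\<exists>k. (spread_step V E p q ^^ k) S = V)"

definition sigma :: "'a set \<Rightarrow> ('a \<Rightarrow> 'a \<Rightarrow> bool) \<Rightarrow> nat \<Rightarrow> enat \<Rightarrow> nat" where
  "sigma V E p q = Min {card S | S. spreading_set V E p q S}"

end

theory Submission
  imports Defs
begin

lemma card_ge2_obtain:
  assumes "2 \<le> card A"
  shows "\<exists>a b. a\<in>A \<and> b\<in>A \<and> a\<noteq>b"
proof -
  have fin: "finite A" using assms card.infinite by fastforce
  have "A \<noteq> {}" using assms by auto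
  then obtain a where a: "a \<in> A" by blast
  have "card (A - {a}) \<ge> 1" using assms a fin by (simp add: card_Diff_singleton)
  then have "A - {a} \<noteq> {}" by fastforce
  then obtain b where "b \<in> A - {a}" by blast
  then show ?thesis using a by blast
qed

lemma card_ge3_obtain:
  assumes "3 \<le> card A"
  shows "\<exists>a b c. a\<in>A \<and> b\<in>A \<and> c\<in>A \<and> a\<noteq>b \<and> a\<noteq>c \<and> b\<noteq>c"
proof -
  have fin: "finite A" using assms card.infinite by fastforce
  have "A \<noteq> {}" using assms by auto
  then obtain a where a: "a \<in> A" by blast
  have "card (A - {a}) \<ge> 2" using assms a fin by (simp add: card_Diff_singleton)
  then obtain b c where "b \<in> A - {a}" "c \<in> A - {a}" "b \<noteq> c"
    using card_ge2_obtain by blast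
  then show ?thesis using a by blast
qed

lemma nbhd_sub: "nbhd V E v \<subseteq> V" by (auto simp: nbhd_def)

lemma step_sub:
  assumes "B \<subseteq> V" shows "spread_step V E p q B \<subseteq> V"
  using assms by (auto simp: spread_step_def)

lemma step_incr: "B \<subseteq> spread_step V E p q B"
  by (auto simp: spread_step_def)

lemma iter_sub:
  assumes "S \<subseteq> V" shows "(spread_step V E p q ^^ k) S \<subseteq> V"
proof (induction k)
  case 0 then show ?case using assms by simp
next
  case (Suc k) then show ?case using step_sub[of "(spread_step V E p q ^^ k) S" V E p q] by simp
qed

lemma iter_incr: "S \<subseteq> (spread_step V E p q ^^ k) S"
proof (induction k)
  case 0 then show ?case by simp
next
  case (Suc k) then show ?case using step_incr[of "(spread_step V E p q ^^ k) S" V E p q] by simp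
qed

lemma iter_fix:
  assumes "spread_step V E p q B = B" shows "(spread_step V E p q ^^ k) B = B"
  using assms by (induction k) auto

lemma stabilize:
  assumes "finite V" "S \<subseteq> V"
  shows "\<exists>k. spread_step V E p q ((spread_step V E p q ^^ k) S) = (spread_step V E p q ^^ k) S"
proof (rule ccontr)
  let ?f = "spread_step V E p q"
  assume "\<not> ?thesis"
  then have ne: "\<And>k. ?f ((?f ^^ k) S) \<noteq> (?f ^^ k) S" by blast
  have A: "k \<le> card ((?f ^^ k) S)" for k
  proof (induction k)
    case 0 then show ?case by simp
  next
    case (Suc k)
    have eq: "(?f ^^ Suc k) S = ?f ((?f ^^ k) S)" by simp
    have "(?f ^^ k) S \<subset> (?f ^^ Suc k) S" unfolding eq
      using psubsetI[OF step_incr[of "(?f ^^ k) S" V E p q] ne[of k, symmetric]] .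
    moreover have "finite ((?f ^^ Suc k) S)" by (rule finite_subset[OF iter_sub[OF assms(2)] assms(1)])
    ultimately have "card ((?f ^^ k) S) < card ((?f ^^ Suc k) S)" by (rule psubset_card_mono[rotated])
    then show ?case using Suc by simp
  qed
  have B: "card ((?f ^^ k) S) \<le> card V" for k
    by (rule card_mono[OF assms(1) iter_sub[OF assms(2)]])
  have "Suc (card V) \<le> card V" using A[of "Suc (card V)"] B[of "Suc (card V)"] by linarith
  then show False by simp
qed

lemma spreading_iff_fix:
  assumes "spread_step V E p q B = B" "B = (spread_step V E p q ^^ k) S" "B = V" "S \<subseteq> V"
  shows "spreading_set V E p q S"
  using assms unfolding spreading_set_def by blast


lemma stuck_full:
  assumes g: "graph V E" and conn: "connected_graph V E" and cf: "claw_free V E" and cub: "cubic V E"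
    and vc: "vertex_cover V E C" and xV: "x \<in> V" and xC: "x \<notin> C"
    and SB: "insert x C \<subseteq> B" and BV: "B \<subseteq> V" and fx: "spread_step V E 3 1 B = B"
  shows "B = V"
proof (rule ccontr)
  assume "B \<noteq> V"
  then obtain w where wV: "w \<in> V" and wB: "w \<notin> B" using BV by blast
  have sym: "\<And>u v. E u v \<Longrightarrow> E v u" and inV: "\<And>u v. E u v \<Longrightarrow> u \<in> V \<and> v \<in> V"
    using g unfolding graph_def by blast+
  have cov: "\<And>u v. E u v \<Longrightarrow> u \<in> C \<or> v \<in> C" using vc unfolding vertex_cover_def by blast
  have nbr_blue: "u \<in> B" if "w' \<notin> B" "E w' u" for w' u
    using cov[OF that(2)] that(1) SB by blast
  have key: "2 \<le> card (nbhd V E u - B)" if w'V: "w' \<in> V" and w'B: "w' \<notin> B" and e: "E w' u" for w' u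
  proof (rule ccontr)
    assume le: "\<not> 2 \<le> card (nbhd V E u - B)"
    have sub: "nbhd V E w' \<subseteq> B" using nbr_blue[OF w'B] unfolding nbhd_def by blast
    then have "nbhd V E w' \<inter> B = nbhd V E w'" by blast
    then have c3: "card (nbhd V E w' \<inter> B) = 3" using cub w'V unfolding cubic_def by simp
    have uN: "u \<in> nbhd V E w' \<inter> B" using sub e inV unfolding nbhd_def by blast
    have "enat (card (nbhd V E u - B)) \<le> 1" using le by (simp add: one_enat_def)
    then have "w' \<in> spread_step V E 3 1 B"
      unfolding spread_step_def using w'V w'B c3 uN by auto
    then show False using fx w'B by simp
  qed
  define Z where "Z v \<longleftrightarrow> v \<in> B \<and> (\<forall>u. E v u \<longrightarrow> u \<in> B)" for v
  have Zx: "Z x" unfolding Z_def using SB cov xC by blast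
  have zprop: "Z y" if Zv: "Z v" and e: "E v y" for v y
  proof (rule ccontr)
    assume nZ: "\<not> Z y"
    have yB: "y \<in> B" using Zv e unfolding Z_def by blast
    then obtain u where eyu: "E y u" and uB: "u \<notin> B" using nZ unfolding Z_def by blast
    have "2 \<le> card (nbhd V E y - B)" using key[of u y] inV[OF eyu] uB sym[OF eyu] by blast
    then obtain u1 u2 where u12: "u1 \<in> nbhd V E y - B" "u2 \<in> nbhd V E y - B" "u1 \<noteq> u2"
      using card_ge2_obtain by blast
    have vN: "v \<in> nbhd V E y" using sym[OF e] inV[OF e] unfolding nbhd_def by blast
    have vB: "v \<in> B" using Zv unfolding Z_def by blast
    have n12: "\<not> E u1 u2" using cov u12 SB by blast
    have n1v: "\<not> E u1 v" using Zv sym u12 unfolding Z_def by blast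
    have n2v: "\<not> E u2 v" using Zv sym u12 unfolding Z_def by blast
    have yV: "y \<in> V" using inV[OF e] by blast
    show False using cf yV u12 vN vB n12 n1v n2v unfolding claw_free_def by blast
  qed
  have "E\<^sup>*\<^sup>* x w" using conn xV wV unfolding connected_graph_def by blast
  then have "Z w" by (induction rule: rtranclp_induct) (use Zx zprop in blast)+
  then show False using wB unfolding Z_def by blast
qed


lemma card_set_finite:
  assumes "finite V" "\<And>S. P S \<Longrightarrow> S \<subseteq> V"
  shows "finite {card S | S. P S}"
proof -
  have "{card S | S. P S} \<subseteq> {..card V}"
  proof
    fix n assume "n \<in> {card S | S. P S}"
    then obtain S where "P S" "n = card S" by blast
    then show "n \<in> {..card V}" using card_mono[OF assms(1) assms(2)] by simp
  qed
  then show ?thesis using finite_subset by blast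
qed

lemma V_spreads: "spreading_set V E p q V"
  unfolding spreading_set_def by (rule conjI, simp, rule exI[of _ 0], simp)

lemma sigma_le:
  assumes "finite V" "spreading_set V E p q S"
  shows "sigma V E p q \<le> card S"
proof -
  have "finite {card S | S. spreading_set V E p q S}"
    by (rule card_set_finite[OF assms(1)]) (simp add: spreading_set_def)
  moreover have "card S \<in> {card S | S. spreading_set V E p q S}" using assms(2) by blast
  ultimately show ?thesis unfolding sigma_def by (rule Min_le)
qed

lemma sigma_attained:
  assumes "finite V"
  shows "\<exists>S. spreading_set V E p q S \<and> sigma V E p q = card S"
proof -
  have fin: "finite {card S | S. spreading_set V E p q S}"
    by (rule card_set_finite[OF assms(1)]) (simp add: spreading_set_def)
  have "{card S | S. spreading_set V E p q S} \<noteq> {}" using V_spreads by blast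
  from Min_in[OF fin this] show ?thesis unfolding sigma_def by auto
qed

lemma vc_attained:
  assumes "graph V E"
  shows "\<exists>C. vertex_cover V E C \<and> vc_number V E = card C"
proof -
  have fin: "finite {card C | C. vertex_cover V E C}"
    by (rule card_set_finite[of V]) (use assms in \<open>simp_all add: vertex_cover_def graph_def\<close>)
  have "vertex_cover V E V" using assms unfolding vertex_cover_def graph_def by blast
  then have "{card C | C. vertex_cover V E C} \<noteq> {}" by blast
  from Min_in[OF fin this] show ?thesis unfolding vc_number_def by auto
qed

lemma vc_le:
  assumes "graph V E" "vertex_cover V E C"
  shows "vc_number V E \<le> card C"
proof -
  have fin: "finite {card C | C. vertex_cover V E C}"
    by (rule card_set_finite[of V]) (use assms in \<open>simp_all add: vertex_cover_def graph_def\<close>)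
  moreover have "card C \<in> {card C | C. vertex_cover V E C}" using assms(2) by blast
  ultimately show ?thesis unfolding vc_number_def by (rule Min_le)
qed

lemma upper_bound:
  assumes g: "graph V E" and conn: "connected_graph V E" and cf: "claw_free V E" and cub: "cubic V E"
  shows "sigma V E 3 1 \<le> vc_number V E + 1"
proof -
  have finV: "finite V" using g unfolding graph_def by blast
  obtain C where vc: "vertex_cover V E C" and cC: "vc_number V E = card C"
    using vc_attained[OF g] by blast
  have CV: "C \<subseteq> V" using vc unfolding vertex_cover_def by blast
  show ?thesis
  proof (cases "V - C = {}")
    case True
    then have "C = V" using CV by blast
    then have "sigma V E 3 1 \<le> card C" using sigma_le[OF finV V_spreads] by simp
    then show ?thesis using cC by simp
  next
    case False
    then obtain x where xV: "x \<in> V" and xC: "x \<notin> C" by blast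
    let ?S = "insert x C"
    have SV: "?S \<subseteq> V" using xV CV by blast
    obtain k where k: "spread_step V E 3 1 ((spread_step V E 3 1 ^^ k) ?S) = (spread_step V E 3 1 ^^ k) ?S"
      using stabilize[OF finV SV] by blast
    have "(spread_step V E 3 1 ^^ k) ?S = V"
      by (rule stuck_full[OF g conn cf cub vc xV xC iter_incr iter_sub[OF SV] k])
    then have "spreading_set V E 3 1 ?S" unfolding spreading_set_def using SV by blast
    then have "sigma V E 3 1 \<le> card ?S" using sigma_le[OF finV] by blast
    also have "card ?S \<le> card C + 1" by (simp add: card_insert_le_m1)
    finally show ?thesis using cC by simp
  qed
qed


lemma spreading_cover:
  assumes g: "graph V E" and cub: "cubic V E" and sp: "spreading_set V E 3 1 S"
  shows "vertex_cover V E S"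
proof -
  have SV: "S \<subseteq> V" using sp unfolding spreading_set_def by blast
  obtain k where k: "(spread_step V E 3 1 ^^ k) S = V" using sp unfolding spreading_set_def by blast
  have finV: "finite V" using g unfolding graph_def by blast
  have sym: "\<And>u v. E u v \<Longrightarrow> E v u" and inV: "\<And>u v. E u v \<Longrightarrow> u \<in> V \<and> v \<in> V"
    using g unfolding graph_def by blast+
  have stay: "u \<notin> spread_step V E 3 1 B" if e: "E u v" and uB: "u \<notin> B" and vB: "v \<notin> B" for u v B
  proof
    assume "u \<in> spread_step V E 3 1 B"
    then have c: "3 \<le> card (nbhd V E u \<inter> B)" using uB unfolding spread_step_def by blast
    have fin: "finite (nbhd V E u)" using finV nbhd_sub finite_subset by metis
    have c3: "card (nbhd V E u) = 3" using cub inV[OF e] unfolding cubic_def by blast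
    have "nbhd V E u \<inter> B = nbhd V E u"
      by (rule card_seteq[OF fin]) (use c c3 in auto)
    moreover have "v \<in> nbhd V E u" using e inV unfolding nbhd_def by blast
    ultimately show False using vB by blast
  qed
  have "\<forall>u v. E u v \<longrightarrow> u \<in> S \<or> v \<in> S"
  proof (intro allI impI)
    fix u v assume e: "E u v"
    show "u \<in> S \<or> v \<in> S"
    proof (rule ccontr)
      assume "\<not> (u \<in> S \<or> v \<in> S)"
      then have "u \<notin> (spread_step V E 3 1 ^^ j) S \<and> v \<notin> (spread_step V E 3 1 ^^ j) S" for j
      proof (induction j)
        case 0 then show ?case by simp
      next
        case (Suc j)
        then have "u \<notin> (spread_step V E 3 1 ^^ j) S" "v \<notin> (spread_step V E 3 1 ^^ j) S" by blast+
        then show ?case using stay[OF e] stay[OF sym[OF e]] by simp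
      qed
      then show False using k inV[OF e] by blast
    qed
  qed
  then show ?thesis unfolding vertex_cover_def using SV by blast
qed

lemma double_count:
  assumes g: "graph V E" and WV: "W \<subseteq> V" and ind: "\<And>a b. a \<in> W \<Longrightarrow> b \<in> W \<Longrightarrow> \<not> E a b"
  shows "(\<Sum>c\<in>V-W. card (nbhd V E c \<inter> W)) = (\<Sum>w\<in>W. card (nbhd V E w))"
proof -
  have finV: "finite V" using g unfolding graph_def by blast
  have finW: "finite W" using finV WV finite_subset by blast
  have sym: "\<And>u v. E u v \<Longrightarrow> E v u" and inV: "\<And>u v. E u v \<Longrightarrow> u \<in> V \<and> v \<in> V"
    using g unfolding graph_def by blast+
  have 1: "card (nbhd V E c \<inter> W) = (\<Sum>w\<in>W. of_bool (E w c))" for c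
  proof -
    have "nbhd V E c \<inter> W = W \<inter> {w. E w c}" using sym WV unfolding nbhd_def by blast
    then show ?thesis using sum_of_bool_eq[where 'a=nat, OF finW finW, of "\<lambda>w. E w c"] by (simp add: Int_commute)
  qed
  have 2: "card (nbhd V E w) = (\<Sum>c\<in>V-W. of_bool (E w c))" if "w \<in> W" for w
  proof -
    have "nbhd V E w = (V - W) \<inter> {c. E w c}" using ind[OF that] unfolding nbhd_def by blast
    then show ?thesis using sum_of_bool_eq[where 'a=nat, of "V - W" "\<lambda>c. E w c"] finV by simp
  qed
  have "(\<Sum>c\<in>V-W. card (nbhd V E c \<inter> W)) = (\<Sum>c\<in>V-W. \<Sum>w\<in>W. (of_bool (E w c) :: nat))"
    using 1 by simp
  also have "\<dots> = (\<Sum>w\<in>W. \<Sum>c\<in>V-W. (of_bool (E w c) :: nat))" by (rule sum.swap)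
  also have "\<dots> = (\<Sum>w\<in>W. card (nbhd V E w))" using 2 by simp
  finally show ?thesis .
qed

lemma count_facts:
  assumes g: "graph V E" and cf: "claw_free V E" and cub: "cubic V E"
    and WV: "W \<subseteq> V" and ind: "\<And>a b. a \<in> W \<Longrightarrow> b \<in> W \<Longrightarrow> \<not> E a b"
  shows "(\<Sum>c\<in>V-W. card (nbhd V E c \<inter> W)) = 3 * card W"
    and "\<And>c. c \<in> V - W \<Longrightarrow> card (nbhd V E c \<inter> W) \<le> 2"
proof -
  have "(\<Sum>w\<in>W. card (nbhd V E w)) = (\<Sum>w\<in>W. 3)"
    using cub WV unfolding cubic_def by (intro sum.cong) auto
  then show "(\<Sum>c\<in>V-W. card (nbhd V E c \<inter> W)) = 3 * card W"
    using double_count[OF g WV ind] by simp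
next
  fix c assume c: "c \<in> V - W"
  show "card (nbhd V E c \<inter> W) \<le> 2"
  proof (rule ccontr)
    assume "\<not> ?thesis"
    then have "3 \<le> card (nbhd V E c \<inter> W)" by simp
    then obtain a b d where "a \<in> nbhd V E c \<inter> W" "b \<in> nbhd V E c \<inter> W" "d \<in> nbhd V E c \<inter> W"
      "a \<noteq> b" "a \<noteq> d" "b \<noteq> d" using card_ge3_obtain by blast
    then show False using cf c ind unfolding claw_free_def by blast
  qed
qed

lemma cover_bound:
  assumes g: "graph V E" and cf: "claw_free V E" and cub: "cubic V E" and vc: "vertex_cover V E C"
  shows "3 * card V \<le> 5 * card C"
proof -
  have CV: "C \<subseteq> V" using vc unfolding vertex_cover_def by blast
  have finV: "finite V" using g unfolding graph_def by blast
  let ?W = "V - C"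
  have ind: "\<And>a b. a \<in> ?W \<Longrightarrow> b \<in> ?W \<Longrightarrow> \<not> E a b" using vc unfolding vertex_cover_def by blast
  have VW: "V - ?W = C" using CV by blast
  note cf1 = count_facts[OF g cf cub Diff_subset[of V C] ind]
  have "(\<Sum>c\<in>C. card (nbhd V E c \<inter> ?W)) \<le> (\<Sum>c\<in>C. 2)"
    by (rule sum_mono) (use cf1(2) VW in auto)
  then have "3 * card ?W \<le> 2 * card C" using cf1(1) VW by simp
  moreover have "card ?W = card V - card C" using CV finV by (simp add: card_Diff_subset finite_subset)
  moreover have "card C \<le> card V" using CV finV card_mono by blast
  ultimately show ?thesis by linarith
qed

lemma tight_stuck:
  assumes g: "graph V E" and cf: "claw_free V E" and cub: "cubic V E" and sp: "spreading_set V E 3 1 S"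
    and eq: "5 * card S = 3 * card V" and ne: "V \<noteq> {}"
  shows False
proof -
  have vc: "vertex_cover V E S" by (rule spreading_cover[OF g cub sp])
  have SV: "S \<subseteq> V" using vc unfolding vertex_cover_def by blast
  have finV: "finite V" using g unfolding graph_def by blast
  have sym: "\<And>u v. E u v \<Longrightarrow> E v u" and inV: "\<And>u v. E u v \<Longrightarrow> u \<in> V \<and> v \<in> V"
    using g unfolding graph_def by blast+
  let ?W = "V - S"
  let ?h = "\<lambda>c. card (nbhd V E c \<inter> ?W)"
  have ind: "\<And>a b. a \<in> ?W \<Longrightarrow> b \<in> ?W \<Longrightarrow> \<not> E a b" using vc unfolding vertex_cover_def by blast
  have VW: "V - ?W = S" using SV by blast
  note cf1 = count_facts[OF g cf cub Diff_subset[of V S] ind]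
  have le2: "\<And>c. c \<in> S \<Longrightarrow> ?h c \<le> 2" using cf1(2) VW by blast
  have sumS: "(\<Sum>c\<in>S. ?h c) = 3 * card ?W" using cf1(1) VW by simp
  have cW: "card ?W = card V - card S" using SV finV by (simp add: card_Diff_subset finite_subset)
  have cS: "card S \<le> card V" using SV finV card_mono by blast
  have "3 * card ?W = 2 * card S" using cW cS eq by linarith
  then have "(\<Sum>c\<in>S. 2 - ?h c) = 0"
    using sumS le2 by (simp add: sum_subtractf_nat)
  moreover have finS: "finite S" using SV finV finite_subset by blast
  ultimately have h2: "\<And>c. c \<in> S \<Longrightarrow> ?h c = 2" using le2 by (simp add: sum_eq_0_iff) (meson le_antisym not_less_eq_eq)
  have "spread_step V E 3 1 S = S"
  proof (rule ccontr)
    assume "spread_step V E 3 1 S \<noteq> S"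
    then obtain w u where "w \<in> V - S" "u \<in> nbhd V E w \<inter> S" "enat (card (nbhd V E u - S)) \<le> 1"
      unfolding spread_step_def by auto
    moreover have "nbhd V E u - S = nbhd V E u \<inter> ?W" using nbhd_sub[of V E u] by blast
    ultimately have "enat 2 \<le> 1" using h2 by auto
    then show False by (simp add: one_enat_def)
  qed
  then have "(spread_step V E 3 1 ^^ k) S = S" for k by (rule iter_fix)
  moreover obtain k where "(spread_step V E 3 1 ^^ k) S = V" using sp unfolding spreading_set_def by blast
  ultimately have "S = V" by simp
  then show False using eq ne finV by simp
qed


definition V10 :: "nat set" where "V10 = {0..<10}"

definition D10 :: "(nat \<times> nat) set" where
  "D10 = {(4,5),(6,7),(8,9),(0,4),(0,5),(1,4),(1,5),(2,6),(2,7),(3,8),(3,9),(0,6),(3,7),(1,8),(2,9)}"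

definition E10 :: "nat \<Rightarrow> nat \<Rightarrow> bool" where
  "E10 u v \<longleftrightarrow> (u,v) \<in> D10 \<or> (v,u) \<in> D10"

lemma V10_cases: "v \<in> V10 \<Longrightarrow> v = 0 \<or> v = 1 \<or> v = 2 \<or> v = 3 \<or> v = 4 \<or> v = 5 \<or> v = 6 \<or> v = 7 \<or> v = 8 \<or> v = 9"
  unfolding V10_def by auto

lemma graph10: "graph V10 E10"
  unfolding graph_def V10_def E10_def D10_def by auto

lemma nb0: "nbhd V10 E10 0 = {4,5,6}" unfolding nbhd_def V10_def E10_def D10_def by auto
lemma nb1: "nbhd V10 E10 1 = {4,5,8}" unfolding nbhd_def V10_def E10_def D10_def by auto
lemma nb2: "nbhd V10 E10 2 = {6,7,9}" unfolding nbhd_def V10_def E10_def D10_def by auto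
lemma nb3: "nbhd V10 E10 3 = {8,9,7}" unfolding nbhd_def V10_def E10_def D10_def by auto
lemma nb4: "nbhd V10 E10 4 = {5,0,1}" unfolding nbhd_def V10_def E10_def D10_def by auto
lemma nb5: "nbhd V10 E10 5 = {4,0,1}" unfolding nbhd_def V10_def E10_def D10_def by auto
lemma nb6: "nbhd V10 E10 6 = {7,2,0}" unfolding nbhd_def V10_def E10_def D10_def by auto
lemma nb7: "nbhd V10 E10 7 = {6,2,3}" unfolding nbhd_def V10_def E10_def D10_def by auto
lemma nb8: "nbhd V10 E10 8 = {9,3,1}" unfolding nbhd_def V10_def E10_def D10_def by auto
lemma nb9: "nbhd V10 E10 9 = {8,3,2}" unfolding nbhd_def V10_def E10_def D10_def by auto

lemma cubic10: "cubic V10 E10"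
  unfolding cubic_def
proof
  fix v assume "v \<in> V10"
  then show "card (nbhd V10 E10 v) = 3"
    using V10_cases nb0 nb1 nb2 nb3 nb4 nb5 nb6 nb7 nb8 nb9 by fastforce
qed

lemma noclaw:
  assumes "nbhd V E v = {p,q,r}" "E p q" "\<And>a b. E a b \<Longrightarrow> E b a"
  shows "\<not> (\<exists>a b c. a \<in> nbhd V E v \<and> b \<in> nbhd V E v \<and> c \<in> nbhd V E v
       \<and> a \<noteq> b \<and> a \<noteq> c \<and> b \<noteq> c \<and> \<not> E a b \<and> \<not> E a c \<and> \<not> E b c)"
  using assms by auto

lemma E10_sym: "E10 a b \<Longrightarrow> E10 b a" unfolding E10_def by blast

lemma claw10: "claw_free V10 E10"
  unfolding claw_free_def
proof
  assume "\<exists>v\<in>V10. \<exists>a b c. a \<in> nbhd V10 E10 v \<and> b \<in> nbhd V10 E10 v \<and> c \<in> nbhd V10 E10 v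
       \<and> a \<noteq> b \<and> a \<noteq> c \<and> b \<noteq> c \<and> \<not> E10 a b \<and> \<not> E10 a c \<and> \<not> E10 b c"
  then obtain v where v: "v \<in> V10" and cl: "\<exists>a b c. a \<in> nbhd V10 E10 v \<and> b \<in> nbhd V10 E10 v \<and> c \<in> nbhd V10 E10 v
       \<and> a \<noteq> b \<and> a \<noteq> c \<and> b \<noteq> c \<and> \<not> E10 a b \<and> \<not> E10 a c \<and> \<not> E10 b c" by blast
  have e: "E10 4 5" "E10 4 0" "E10 6 7" "E10 8 9" "E10 5 0" "E10 7 2" "E10 9 3" "E10 6 2" "E10 8 3"
    unfolding E10_def D10_def by auto
  show False using V10_cases[OF v]
  proof (elim disjE)
    assume "v = 0" then show False using noclaw[OF nb0 e(1) E10_sym] cl by blast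
  next
    assume "v = 1" then show False using noclaw[OF nb1 e(1) E10_sym] cl by blast
  next
    assume "v = 2" then show False using noclaw[OF nb2 e(3) E10_sym] cl by blast
  next
    assume "v = 3" then show False using noclaw[OF nb3 e(4) E10_sym] cl by blast
  next
    assume "v = 4" then show False using noclaw[OF nb4 e(5) E10_sym] cl by blast
  next
    assume "v = 5" then show False using noclaw[OF nb5 e(2) E10_sym] cl by blast
  next
    assume "v = 6" then show False using noclaw[OF nb6 e(6) E10_sym] cl by blast
  next
    assume "v = 7" then show False using noclaw[OF nb7 e(8) E10_sym] cl by blast
  next
    assume "v = 8" then show False using noclaw[OF nb8 e(7) E10_sym] cl by blast
  next
    assume "v = 9" then show False using noclaw[OF nb9 e(9) E10_sym] cl by blast
  qed
qed

lemma conn10: "connected_graph V10 E10"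
proof -
  have e: "E10 0 4" "E10 0 5" "E10 0 6" "E10 6 7" "E10 6 2" "E10 7 3" "E10 3 8" "E10 3 9" "E10 4 1"
    unfolding E10_def D10_def by auto
  have r: "E10\<^sup>*\<^sup>* 0 v" if "v \<in> V10" for v
  proof -
    have s: "\<And>a b c. E10\<^sup>*\<^sup>* a b \<Longrightarrow> E10 b c \<Longrightarrow> E10\<^sup>*\<^sup>* a c" by (rule rtranclp.rtrancl_into_rtrancl)
    have r0: "E10\<^sup>*\<^sup>* 0 0" by simp
    have r4: "E10\<^sup>*\<^sup>* 0 4" by (rule s[OF r0 e(1)])
    have r5: "E10\<^sup>*\<^sup>* 0 5" by (rule s[OF r0 e(2)])
    have r6: "E10\<^sup>*\<^sup>* 0 6" by (rule s[OF r0 e(3)])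
    have r7: "E10\<^sup>*\<^sup>* 0 7" by (rule s[OF r6 e(4)])
    have r2: "E10\<^sup>*\<^sup>* 0 2" by (rule s[OF r6 e(5)])
    have r3: "E10\<^sup>*\<^sup>* 0 3" by (rule s[OF r7 e(6)])
    have r8: "E10\<^sup>*\<^sup>* 0 8" by (rule s[OF r3 e(7)])
    have r9: "E10\<^sup>*\<^sup>* 0 9" by (rule s[OF r3 e(8)])
    have r1: "E10\<^sup>*\<^sup>* 0 1" by (rule s[OF r4 e(9)])
    show ?thesis using V10_cases[OF that] r0 r1 r2 r3 r4 r5 r6 r7 r8 r9 by blast
  qed
  have conv: "E10\<inverse>\<inverse> = E10" using E10_sym by (intro ext) blast
  have r': "E10\<^sup>*\<^sup>* v 0" if "v \<in> V10" for v
    using rtranclp_converseI[OF r[OF that]] conv by simp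
  show ?thesis unfolding connected_graph_def
    using r r' by (meson rtranclp_trans)
qed

lemma card10: "card V10 = 10" unfolding V10_def by simp

lemma vc10: "vc_number V10 E10 = 6"
proof -
  have cov: "vertex_cover V10 E10 {4,5,6,7,8,9}"
    unfolding vertex_cover_def V10_def E10_def D10_def by auto
  have "vc_number V10 E10 \<le> 6" using vc_le[OF graph10 cov] by simp
  moreover obtain C where "vertex_cover V10 E10 C" "vc_number V10 E10 = card C"
    using vc_attained[OF graph10] by blast
  moreover have "3 * card V10 \<le> 5 * card C"
    using cover_bound[OF graph10 claw10 cubic10] calculation(2) by blast
  ultimately show ?thesis using card10 by linarith
qed

lemma sigma10: "sigma V10 E10 3 1 = 7"
proof -
  have "sigma V10 E10 3 1 \<le> 7" using upper_bound[OF graph10 conn10 claw10 cubic10] vc10 by simp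
  moreover obtain S where sp: "spreading_set V10 E10 3 1 S" and cS: "sigma V10 E10 3 1 = card S"
    using sigma_attained[of V10] graph10 unfolding graph_def by blast
  moreover have "3 * card V10 \<le> 5 * card S"
    using cover_bound[OF graph10 claw10 cubic10 spreading_cover[OF graph10 cubic10 sp]] .
  moreover have "5 * card S \<noteq> 3 * card V10"
  proof
    assume "5 * card S = 3 * card V10"
    then show False using tight_stuck[OF graph10 claw10 cubic10 sp] card10 by fastforce
  qed
  ultimately show ?thesis using card10 by linarith
qed

theorem proposition3p12:
  shows "(\<forall>(V :: 'a set) E. graph V E \<and> connected_graph V E \<and> claw_free V E \<and> cubic V E
            \<longrightarrow> sigma V E 3 1 \<le> vc_number V E + 1)
       \<and> (\<exists>(V :: nat set) E. graph V E \<and> connected_graph V E \<and> claw_free V E \<and> cubic V E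
            \<and> sigma V E 3 1 = vc_number V E + 1)"
proof
  show "\<forall>(V :: 'a set) E. graph V E \<and> connected_graph V E \<and> claw_free V E \<and> cubic V E
            \<longrightarrow> sigma V E 3 1 \<le> vc_number V E + 1"
    using upper_bound by blast
  show "\<exists>(V :: nat set) E. graph V E \<and> connected_graph V E \<and> claw_free V E \<and> cubic V E
            \<and> sigma V E 3 1 = vc_number V E + 1"
    using graph10 conn10 claw10 cubic10 sigma10 vc10 by (intro exI[of _ V10] exI[of _ E10]) simp
qed

end
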